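(* There is an absolute constant $c>0$ such that for every $x\in\mathbb R$, letting $f_x$ be the characteristic function of $\Delta(x)=[x-\tfrac12 d(x),\,x+\tfrac12 d(x)]$, one has $(Gf_x)(t)\ge c^{-1}d(x)^2$ for all $t\in\Delta(x)$.
   Context: Let $q:\mathbb R\to\mathbb R$ be measurable with $q\in L_1^{\mathrm{loc}}(\mathbb R)$ and $q(x)\ge1$ a.e. A principal fundamental system of solutions (PFSS) of $z''=q(x)z$ is a pair $u,v$ of solutions ($C^1$, derivative locally absolutely continuous, equation a.e.) such that for all $x$: $u>0$, $v>0$, $u'<0$, $v'>0$, $v'u-u'v=1$, $u(x)=v(x)\int_x^\infty v(t)^{-2}dt$, and $u,u'\to0$ as $x\to\infty$, $v,v'\to0$ as $x\to-\infty$, $v,v'\to\infty$ as $x\to\infty$, $u,|u'|\to\infty$ as $x\to-\infty$. Fix a PFSS $\{u,v\}$. The Green function is $G(x,t)=u(x)v(t)$ for $x\ge t$ and $G(x,t)=u(t)v(x)$ for $x\le t$, and $(Gf)(x)=\int_{-\infty}^\infty G(x,t)f(t)\,dt$. For each $x\in\mathbb R$, $d(x)$ denotes the unique positive solution $d$ of $d\int_{x-d}^{x+d}q(t)\,dt=2$. *)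

theory Defs
  imports "HOL-Analysis.Analysis"
begin

text \<open>Absolute continuity of a real function on a compact interval (epsilon-delta definition,
  finite families of non-overlapping subintervals).\<close>
definition abs_cont_on :: "real \<Rightarrow> real \<Rightarrow> (real \<Rightarrow> real) \<Rightarrow> bool" where
  "abs_cont_on a b g \<longleftrightarrow>
     (\<forall>e>0. \<exists>\<delta>>0. \<forall>n::nat. \<forall>s t :: nat \<Rightarrow> real.
        ((\<forall>i<n. a \<le> s i \<and> s i \<le> t i \<and> t i \<le> b) \<and>
         (\<forall>i<n. \<forall>j<n. i \<noteq> j \<longrightarrow> t i \<le> s j \<or> t j \<le> s i) \<and>
         (\<Sum>i<n. t i - s i) < \<delta>)
        \<longrightarrow> (\<Sum>i<n. \<bar>g (t i) - g (s i)\<bar>) < e)"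

definition loc_abs_cont :: "(real \<Rightarrow> real) \<Rightarrow> bool" where
  "loc_abs_cont g \<longleftrightarrow> (\<forall>a b. abs_cont_on a b g)"

text \<open>Standing hypotheses on the potential q.\<close>
definition admissible_q :: "(real \<Rightarrow> real) \<Rightarrow> bool" where
  "admissible_q q \<longleftrightarrow> q \<in> borel_measurable lborel \<and>
     (\<forall>a b. set_integrable lborel {a..b} q) \<and>
     (AE x in lborel. q x \<ge> 1)"

text \<open>A solution of z'' = q z: C^1, derivative locally absolutely continuous,
  equation holds almost everywhere.\<close>
definition is_solution :: "(real \<Rightarrow> real) \<Rightarrow> (real \<Rightarrow> real) \<Rightarrow> bool" where
  "is_solution q z \<longleftrightarrow> (\<forall>x. z differentiable at x) \<and> continuous_on UNIV (deriv z) \<and>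
     loc_abs_cont (deriv z) \<and>
     (AE x in lborel. (deriv z has_real_derivative q x * z x) (at x))"

definition PFSS :: "(real \<Rightarrow> real) \<Rightarrow> (real \<Rightarrow> real) \<Rightarrow> (real \<Rightarrow> real) \<Rightarrow> bool" where
  "PFSS q u v \<longleftrightarrow> is_solution q u \<and> is_solution q v \<and>
     (\<forall>x. u x > 0 \<and> v x > 0 \<and> deriv u x < 0 \<and> deriv v x > 0 \<and>
          deriv v x * u x - deriv u x * v x = 1 \<and>
          set_integrable lborel {x..} (\<lambda>t. 1 / (v t)\<^sup>2) \<and>
          u x = v x * (LBINT t:{x..}. 1 / (v t)\<^sup>2)) \<and>
     (u \<longlongrightarrow> 0) at_top \<and> (deriv u \<longlongrightarrow> 0) at_top \<and>
     (v \<longlongrightarrow> 0) at_bot \<and> (deriv v \<longlongrightarrow> 0) at_bot \<and>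
     filterlim v at_top at_top \<and> filterlim (deriv v) at_top at_top \<and>
     filterlim u at_top at_bot \<and> filterlim (\<lambda>x. \<bar>deriv u x\<bar>) at_top at_bot"

definition green :: "(real \<Rightarrow> real) \<Rightarrow> (real \<Rightarrow> real) \<Rightarrow> real \<Rightarrow> real \<Rightarrow> real" where
  "green u v x t = (if x \<ge> t then u x * v t else u t * v x)"

definition green_op :: "(real \<Rightarrow> real) \<Rightarrow> (real \<Rightarrow> real) \<Rightarrow> (real \<Rightarrow> real) \<Rightarrow> real \<Rightarrow> real" where
  "green_op u v f x = (LBINT t. green u v x t * f t)"

text \<open>d(x): the unique positive d with d * integral_{x-d}^{x+d} q = 2.\<close>
definition dfun :: "(real \<Rightarrow> real) \<Rightarrow> real \<Rightarrow> real" where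
  "dfun q x = (THE d. d > 0 \<and> d * (LBINT t=x-d..x+d. q t) = 2)"

definition Delta :: "(real \<Rightarrow> real) \<Rightarrow> real \<Rightarrow> real set" where
  "Delta q x = {x - dfun q x / 2 .. x + dfun q x / 2}"

end

theory Submission
  imports Defs
begin

lemma vec_drop_image: "(\<lambda>x::real^1. x $ 1) ` (vec::real\<Rightarrow>real^1) ` S = S"
  by (simp add: image_image)

lemma vec_measure:
  fixes T :: "real set"
  shows "measure lebesgue ((vec::real\<Rightarrow>real^1) ` T) = measure lebesgue T"
    and "(vec::real\<Rightarrow>real^1) ` T \<in> lmeasurable \<longleftrightarrow> T \<in> lmeasurable"
proof -
  have 1: "(\<lambda>x::real^1. 1::real) integrable_on (vec::real\<Rightarrow>real^1) ` T \<longleftrightarrow> (\<lambda>x::real. 1::real) integrable_on T"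
  proof
    assume "(\<lambda>x::real^1. 1::real) integrable_on (vec::real\<Rightarrow>real^1) ` T"
    then have "((\<lambda>x::real^1. 1::real) \<circ> vec) integrable_on (\<lambda>x::real^1. x $ 1) ` (vec::real\<Rightarrow>real^1) ` T"
      using has_integral_vec1_I integrable_on_def by blast
    then show "(\<lambda>x::real. 1::real) integrable_on T" by (simp add: vec_drop_image o_def)
  next
    assume "(\<lambda>x::real. 1::real) integrable_on T"
    then have "((\<lambda>x::real^1. 1::real) \<circ> vec) integrable_on (\<lambda>x::real^1. x $ 1) ` (vec::real\<Rightarrow>real^1) ` T"
      by (simp add: vec_drop_image o_def)
    then show "(\<lambda>x::real^1. 1::real) integrable_on (vec::real\<Rightarrow>real^1) ` T"
      using has_integral_vec1_D integrable_on_def by blast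
  qed
  have 2: "integral ((vec::real\<Rightarrow>real^1) ` T) (\<lambda>x::real^1. 1::real) = integral T (\<lambda>x::real. 1::real)"
    by (subst integral_vec1_eq) (simp add: vec_drop_image o_def)
  show "(vec::real\<Rightarrow>real^1) ` T \<in> lmeasurable \<longleftrightarrow> T \<in> lmeasurable"
    using 1 by (simp add: lmeasurable_iff_integrable_on)
  show "measure lebesgue ((vec::real\<Rightarrow>real^1) ` T) = measure lebesgue T"
  proof (cases "T \<in> lmeasurable")
    case True
    then show ?thesis using 1 2 lmeasure_integral lmeasurable_iff_integrable_on by metis
  next
    case False
    then have F2: "(vec::real\<Rightarrow>real^1) ` T \<notin> lmeasurable"
      using 1 by (simp add: lmeasurable_iff_integrable_on)
    have "measure lebesgue T = 0"
    proof (cases "T \<in> sets lebesgue")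
      case True
      then show ?thesis using False by (auto simp: fmeasurable_def measure_def less_top[symmetric])
    qed (simp add: measure_notin_sets)
    moreover have "measure lebesgue ((vec::real\<Rightarrow>real^1) ` T) = 0"
    proof (cases "(vec::real\<Rightarrow>real^1) ` T \<in> sets lebesgue")
      case True
      then show ?thesis using F2 by (auto simp: fmeasurable_def measure_def less_top[symmetric])
    qed (simp add: measure_notin_sets)
    ultimately show ?thesis by simp
  qed
qed

lemma image_measure_1d:
  fixes h h' :: "real \<Rightarrow> real"
  assumes S: "S \<in> sets lebesgue"
    and der: "\<And>x. x \<in> S \<Longrightarrow> (h has_real_derivative h' x) (at x within S)"
    and int: "(\<lambda>x. \<bar>h' x\<bar>) integrable_on S"
  shows "h ` S \<in> lmeasurable \<and> measure lebesgue (h ` S) \<le> integral S (\<lambda>x. \<bar>h' x\<bar>)"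
proof -
  have S': "(vec::real\<Rightarrow>real^1) ` S \<in> sets lebesgue"
    by (auto intro: differentiable_image_in_sets_lebesgue [OF S] differentiable_vec)
  have "((\<lambda>x. vec (h (x $ 1))) has_derivative (*\<^sub>R) (h' z)) (at (vec z) within (vec::real\<Rightarrow>real^1) ` S)"
    if "z \<in> S" for z
    using der [OF that]
    by (simp add: has_real_derivative_iff_has_vector_derivative has_vector_derivative_def has_derivative_vector_1)
  then have der': "\<And>x. x \<in> (vec::real\<Rightarrow>real^1) ` S \<Longrightarrow>
        ((\<lambda>x. vec (h (x$1)) :: real^1) has_derivative (*\<^sub>R) (h' (x$1))) (at x within (vec::real\<Rightarrow>real^1) ` S)"
    by auto
  have int': "(\<lambda>x. \<bar>det (matrix ((*\<^sub>R) (h' (x$1))) :: real^1^1)\<bar>) integrable_on (vec::real\<Rightarrow>real^1) ` S"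
  proof -
    have "((\<lambda>x. \<bar>h' (x$1)\<bar>) \<circ> (vec::real\<Rightarrow>real^1)) integrable_on (\<lambda>x::real^1. x $ 1) ` (vec::real\<Rightarrow>real^1) ` S"
      using int vec_drop_image by (simp add: o_def)
    then have "(\<lambda>x. \<bar>h' (x$1)\<bar>) integrable_on (vec::real\<Rightarrow>real^1) ` S"
      using has_integral_vec1_D integrable_on_def by blast
    then show ?thesis by simp
  qed
  note m1 = measurable_differentiable_image[OF S' der' int']
  note m2 = measure_differentiable_image[OF S' der' int']
  have img: "(\<lambda>x. vec (h (x$1)) :: real^1) ` (vec::real\<Rightarrow>real^1) ` S = (vec::real\<Rightarrow>real^1) ` (h ` S)"
    by (simp add: image_image)
  have I: "integral ((vec::real\<Rightarrow>real^1) ` S) (\<lambda>x. \<bar>det (matrix ((*\<^sub>R) (h' (x$1))) :: real^1^1)\<bar>) = integral S (\<lambda>x. \<bar>h' x\<bar>)"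
    by (subst integral_vec1_eq) (simp add: vec_drop_image o_def)
  show ?thesis
    using m1 m2 unfolding img I vec_measure by simp
qed

lemma disj_open_intervals:
  fixes c d c' d' :: real
  assumes "c < d" "c' < d'" "{c<..<d} \<inter> {c'<..<d'} = {}"
  shows "d \<le> c' \<or> d' \<le> c"
proof (rule ccontr)
  assume a: "\<not> (d \<le> c' \<or> d' \<le> c)"
  have "(max c c' + min d d')/2 \<in> {c<..<d}" using assms(1,2) a by (simp add: max_def min_def)
  moreover have "(max c c' + min d d')/2 \<in> {c'<..<d'}" using assms(1,2) a by (simp add: max_def min_def)
  ultimately show False using assms(3) by blast
qed
lemma ac_delta:
  fixes g :: "real \<Rightarrow> real"
  assumes ac: "abs_cont_on a b g" and "e > 0"
  shows "\<exists>\<delta>>0. \<forall>n::nat. \<forall>s t :: nat \<Rightarrow> real.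
        ((\<forall>i<n. a \<le> s i \<and> s i \<le> t i \<and> t i \<le> b) \<and>
         (\<forall>i<n. \<forall>j<n. i \<noteq> j \<longrightarrow> t i \<le> s j \<or> t j \<le> s i) \<and>
         (\<Sum>i<n. t i - s i) < \<delta>)
        \<longrightarrow> (\<Sum>i<n. \<bar>g (t i) - g (s i)\<bar>) < e"
  using ac \<open>e > 0\<close> unfolding abs_cont_on_def by (elim allE[where x=e]) simp

lemma ac_null_image:
  fixes g :: "real \<Rightarrow> real"
  assumes ac: "abs_cont_on a b g" and cont: "continuous_on {a..b} g"
    and Nsub: "N \<subseteq> {a..b}" and Nneg: "negligible N"
  shows "negligible (g ` N)"
proof (cases "a < b")
  case False
  then have "N \<subseteq> {a}" using Nsub by auto
  then have "finite (g ` N)" by (meson finite.emptyI finite_imageI finite_insert finite_subset)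
  then show ?thesis by (simp add: negligible_finite)
next
  case ab: True
  show ?thesis unfolding negligible_outer_le
  proof (intro allI impI)
    fix e :: real assume "e > 0"
    have "\<exists>\<delta>>0. \<forall>n::nat. \<forall>s t :: nat \<Rightarrow> real.
        ((\<forall>i<n. a \<le> s i \<and> s i \<le> t i \<and> t i \<le> b) \<and>
         (\<forall>i<n. \<forall>j<n. i \<noteq> j \<longrightarrow> t i \<le> s j \<or> t j \<le> s i) \<and>
         (\<Sum>i<n. t i - s i) < \<delta>)
        \<longrightarrow> (\<Sum>i<n. \<bar>g (t i) - g (s i)\<bar>) < e"
      by (rule ac_delta[OF ac \<open>e > 0\<close>])
    then obtain \<delta> where \<delta>: "\<delta> > 0 \<and> (\<forall>n::nat. \<forall>s t :: nat \<Rightarrow> real.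
        ((\<forall>i<n. a \<le> s i \<and> s i \<le> t i \<and> t i \<le> b) \<and>
         (\<forall>i<n. \<forall>j<n. i \<noteq> j \<longrightarrow> t i \<le> s j \<or> t j \<le> s i) \<and>
         (\<Sum>i<n. t i - s i) < \<delta>)
        \<longrightarrow> (\<Sum>i<n. \<bar>g (t i) - g (s i)\<bar>) < e)"
      by (rule exE)
    note acd = \<delta>[THEN conjunct2]
    have "\<delta> > 0" using \<delta> by (rule conjunct1)
    have Nm: "N \<in> lmeasurable" "measure lebesgue N = 0"
      using Nneg by (rule negligible_imp_measurable, rule negligible_imp_measure0)
    have Nsub': "N \<subseteq> cbox a b" using Nsub by simp
    have d2: "\<delta>/2 > 0" using \<open>\<delta> > 0\<close> by simp
    obtain \<D> where Dc: "countable \<D>"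
        and Dsub: "\<And>K. K \<in> \<D> \<Longrightarrow> K \<subseteq> cbox a b \<and> K \<noteq> {} \<and> (\<exists>c d. K = cbox c d)"
        and Dpw: "pairwise (\<lambda>A B. interior A \<inter> interior B = {}) \<D>"
        and "\<And>u v. cbox u v \<in> \<D> \<Longrightarrow> \<exists>n. \<forall>i \<in> Basis. v \<bullet> i - u \<bullet> i = (b \<bullet> i - a \<bullet> i)/2^n"
        and Dint: "\<And>K. \<lbrakk>K \<in> \<D>; box a b \<noteq> {}\<rbrakk> \<Longrightarrow> interior K \<noteq> {}"
        and NsubD: "N \<subseteq> \<Union>\<D>" and Dmeas: "\<Union>\<D> \<in> lmeasurable"
        and Dle0: "measure lebesgue (\<Union>\<D>) \<le> measure lebesgue N + \<delta>/2"
      by (rule measurable_outer_intervals_bounded[OF Nm(1) Nsub' d2]) (rule that; assumption+)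
    have Dle: "measure lebesgue (\<Union>\<D>) \<le> \<delta>/2" using Dle0 Nm(2) by simp
    have "\<forall>K\<in>\<D>. \<exists>p. K = {fst p..snd p} \<and> fst p < snd p \<and> a \<le> fst p \<and> snd p \<le> b"
    proof
      fix K assume K: "K \<in> \<D>"
      then obtain c d where K': "K = {c..d}" using Dsub by force
      have "interior K \<noteq> {}" using Dint[OF K] ab by simp
      then have "c < d" using K' by auto
      moreover have "a \<le> c \<and> d \<le> b" using Dsub[OF K] K' \<open>c < d\<close> by auto
      ultimately have "K = {fst (c,d)..snd (c,d)} \<and> fst (c,d) < snd (c,d) \<and> a \<le> fst (c,d) \<and> snd (c,d) \<le> b"
        using K' by simp
      then show "\<exists>p. K = {fst p..snd p} \<and> fst p < snd p \<and> a \<le> fst p \<and> snd p \<le> b" by (rule exI)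
    qed
    from bchoice[OF this] obtain P where P: "\<forall>K\<in>\<D>. K = {fst (P K)..snd (P K)} \<and> fst (P K) < snd (P K) \<and> a \<le> fst (P K) \<and> snd (P K) \<le> b"
      by (rule exE)
    define cc where "cc K = fst (P K)" for K
    define dd where "dd K = snd (P K)" for K
    have cd: "\<And>K. K \<in> \<D> \<Longrightarrow> K = {cc K..dd K} \<and> cc K < dd K \<and> a \<le> cc K \<and> dd K \<le> b"
      using P unfolding cc_def dd_def by blast
    have memK: "\<And>K x. K \<in> \<D> \<Longrightarrow> x \<in> K \<longleftrightarrow> cc K \<le> x \<and> x \<le> dd K"
    proof -
      fix K x assume K: "K \<in> \<D>"
      have "x \<in> {cc K..dd K} \<longleftrightarrow> cc K \<le> x \<and> x \<le> dd K" by simp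
      then show "x \<in> K \<longleftrightarrow> cc K \<le> x \<and> x \<le> dd K" using cd[OF K] by metis
    qed
    have measK: "\<And>K. K \<in> \<D> \<Longrightarrow> measure lebesgue K = dd K - cc K \<and> K \<in> lmeasurable"
    proof -
      fix K assume K: "K \<in> \<D>"
      have lt: "cc K \<le> dd K" using cd[OF K] by auto
      have "measure lebesgue {cc K..dd K} = dd K - cc K \<and> {cc K..dd K} \<in> lmeasurable" using lt by simp
      then show "measure lebesgue K = dd K - cc K \<and> K \<in> lmeasurable" using cd[OF K] by metis
    qed
    have "\<forall>K\<in>\<D>. \<exists>p. fst p \<in> K \<and> snd p \<in> K \<and> (\<forall>y\<in>K. g (fst p) \<le> g y \<and> g y \<le> g (snd p))"
    proof
      fix K assume K: "K \<in> \<D>"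
      have e1: "K = {cc K..dd K}" and e2: "a \<le> cc K" "dd K \<le> b" using cd[OF K] by auto
      have "{cc K..dd K} \<subseteq> {a..b}" using e2 by auto
      then have "K \<subseteq> {a..b}" using e1 by simp
      then have cK: "continuous_on K g" using cont by (rule continuous_on_subset[rotated])
      have "compact K" using e1 by (metis compact_Icc)
      have "cc K \<in> K" using memK[OF K] cd[OF K] by simp
      then have "K \<noteq> {}" by blast
      obtain lo where "lo \<in> K" "\<forall>y\<in>K. g lo \<le> g y"
        using continuous_attains_inf[OF \<open>compact K\<close> \<open>K \<noteq> {}\<close> cK] by blast
      moreover obtain hi where "hi \<in> K" "\<forall>y\<in>K. g y \<le> g hi"
        using continuous_attains_sup[OF \<open>compact K\<close> \<open>K \<noteq> {}\<close> cK] by blast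
      ultimately
      have "fst (lo,hi) \<in> K \<and> snd (lo,hi) \<in> K \<and> (\<forall>y\<in>K. g (fst (lo,hi)) \<le> g y \<and> g y \<le> g (snd (lo,hi)))"
        by simp
      then show "\<exists>p. fst p \<in> K \<and> snd p \<in> K \<and> (\<forall>y\<in>K. g (fst p) \<le> g y \<and> g y \<le> g (snd p))" by (rule exI)
    qed
    from bchoice[OF this] obtain LH where LH: "\<forall>K\<in>\<D>. fst (LH K) \<in> K \<and> snd (LH K) \<in> K \<and> (\<forall>y\<in>K. g (fst (LH K)) \<le> g y \<and> g y \<le> g (snd (LH K)))"
      by (rule exE)
    define lo where "lo K = fst (LH K)" for K
    define hi where "hi K = snd (LH K)" for K
    have lohi: "\<And>K. K \<in> \<D> \<Longrightarrow> lo K \<in> K \<and> hi K \<in> K \<and> (\<forall>y\<in>K. g (lo K) \<le> g y \<and> g y \<le> g (hi K))"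
      using LH unfolding lo_def hi_def by blast
    define A where "A K = {g (lo K) .. g (hi K)}" for K
    define ss where "ss K = min (lo K) (hi K)" for K
    define tt where "tt K = max (lo K) (hi K)" for K
    have bound: "measure lebesgue (\<Union>K\<in>D'. A K) \<le> e" if D': "D' \<subseteq> \<D>" "finite D'" for D'
    proof -
      obtain f where f: "bij_betw f {0..<card D'} D'" using ex_bij_betw_nat_finite[OF D'(2)] by blast
      define n where "n = card D'"
      have fin: "\<And>i. i < n \<Longrightarrow> f i \<in> D'" using f unfolding n_def bij_betw_def by auto
      have finj: "\<And>i j. i < n \<Longrightarrow> j < n \<Longrightarrow> f i = f j \<Longrightarrow> i = j"
        using f unfolding n_def bij_betw_def inj_on_def by auto
      have sK: "cc K \<le> ss K \<and> ss K \<le> tt K \<and> tt K \<le> dd K" if K: "K \<in> \<D>" for K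
      proof -
        have "lo K \<in> K" "hi K \<in> K" using lohi[OF K] by auto
        then have "cc K \<le> lo K \<and> lo K \<le> dd K" "cc K \<le> hi K \<and> hi K \<le> dd K" using memK[OF K] by auto
        then show ?thesis unfolding ss_def tt_def by linarith
      qed
      have c1: "\<forall>i<n. a \<le> ss (f i) \<and> ss (f i) \<le> tt (f i) \<and> tt (f i) \<le> b"
      proof (intro allI impI)
        fix i assume "i < n"
        then have Ki: "f i \<in> \<D>" using fin D'(1) by auto
        show "a \<le> ss (f i) \<and> ss (f i) \<le> tt (f i) \<and> tt (f i) \<le> b" using sK[OF Ki] cd[OF Ki] by linarith
      qed
      have c2: "\<forall>i<n. \<forall>j<n. i \<noteq> j \<longrightarrow> tt (f i) \<le> ss (f j) \<or> tt (f j) \<le> ss (f i)"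
      proof (intro allI impI)
        fix i j assume ij: "i < n" "j < n" "i \<noteq> j"
        then have ne: "f i \<noteq> f j" using finj by blast
        have Ki: "f i \<in> \<D>" "f j \<in> \<D>" using fin ij D'(1) by auto
        have "interior (f i) \<inter> interior (f j) = {}" using Dpw Ki ne by (simp add: pairwise_def)
        then have "{cc (f i)<..<dd (f i)} \<inter> {cc (f j)<..<dd (f j)} = {}"
          using cd[OF Ki(1)] cd[OF Ki(2)] by (metis interior_atLeastAtMost_real)
        then have "dd (f i) \<le> cc (f j) \<or> dd (f j) \<le> cc (f i)"
          using disj_open_intervals cd[OF Ki(1)] cd[OF Ki(2)] by blast
        then show "tt (f i) \<le> ss (f j) \<or> tt (f j) \<le> ss (f i)"
          using sK[OF Ki(1)] sK[OF Ki(2)] by linarith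
      qed
      have neg: "pairwise (\<lambda>S T. negligible (S \<inter> T)) D'"
      proof (unfold pairwise_def, intro ballI impI)
        fix K K' assume KK: "K \<in> D'" "K' \<in> D'" "K \<noteq> K'"
        then have Ki: "K \<in> \<D>" "K' \<in> \<D>" using D'(1) by auto
        have "interior K \<inter> interior K' = {}" using Dpw Ki KK(3) by (simp add: pairwise_def)
        then have "{cc K<..<dd K} \<inter> {cc K'<..<dd K'} = {}"
          using cd[OF Ki(1)] cd[OF Ki(2)] by (metis interior_atLeastAtMost_real)
        then have "dd K \<le> cc K' \<or> dd K' \<le> cc K"
          using disj_open_intervals cd[OF Ki(1)] cd[OF Ki(2)] by blast
        then have "K \<inter> K' \<subseteq> {dd K, dd K'}" using memK[OF Ki(1)] memK[OF Ki(2)] by auto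
        then show "negligible (K \<inter> K')" by (meson finite.emptyI finite_insert negligible_finite negligible_subset)
      qed
      have "(\<Sum>i<n. tt (f i) - ss (f i)) \<le> (\<Sum>i<n. measure lebesgue (f i))"
      proof (rule sum_mono)
        fix i assume "i \<in> {..<n}"
        then have Ki: "f i \<in> \<D>" using fin D'(1) by auto
        then show "tt (f i) - ss (f i) \<le> measure lebesgue (f i)"
          using measK[OF Ki] sK[OF Ki] by simp
      qed
      also have "(\<Sum>i<n. measure lebesgue (f i)) = (\<Sum>K\<in>D'. measure lebesgue K)"
        using sum.reindex_bij_betw[OF f, of "measure lebesgue"] unfolding n_def by (simp add: atLeast0LessThan)
      also have "\<dots> = measure lebesgue (\<Union>D')"
      proof -
        have "\<And>S. S \<in> D' \<Longrightarrow> S \<in> lmeasurable" using measK D'(1) by blast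
        then show ?thesis using measure_negligible_finite_Union[OF D'(2) _ neg] by simp
      qed
      also have "\<dots> \<le> measure lebesgue (\<Union>\<D>)"
      proof (rule measure_mono_fmeasurable)
        show "\<Union>D' \<subseteq> \<Union>\<D>" using D'(1) by auto
        have "\<forall>S\<in>D'. S \<in> sets lebesgue" using measK D'(1) fmeasurable_def by blast
        then show "\<Union>D' \<in> sets lebesgue" using D'(2) by (intro sets.finite_Union) auto
        show "\<Union>\<D> \<in> lmeasurable" by (rule Dmeas)
      qed
      also have "\<dots> < \<delta>" using Dle \<open>\<delta> > 0\<close> by simp
      finally have lt: "(\<Sum>i<n. tt (f i) - ss (f i)) < \<delta>" .
      have "(\<Sum>i<n. \<bar>g (tt (f i)) - g (ss (f i))\<bar>) < e"
        using acd[rule_format, of n "\<lambda>i. ss (f i)" "\<lambda>i. tt (f i)"] c1 c2 lt by simp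
      moreover have "(\<Sum>i<n. \<bar>g (tt (f i)) - g (ss (f i))\<bar>) = (\<Sum>K\<in>D'. \<bar>g (tt K) - g (ss K)\<bar>)"
        using sum.reindex_bij_betw[OF f, of "\<lambda>K. \<bar>g (tt K) - g (ss K)\<bar>"] unfolding n_def by (simp add: atLeast0LessThan)
      moreover have "measure lebesgue (\<Union>K\<in>D'. A K) \<le> (\<Sum>K\<in>D'. measure lebesgue (A K))"
        using measure_UNION_le[OF D'(2), of A lebesgue] unfolding A_def by simp
      moreover have "measure lebesgue (A K) = \<bar>g (tt K) - g (ss K)\<bar>" if "K \<in> D'" for K
      proof -
        have Ki: "K \<in> \<D>" using that D'(1) by auto
        have "g (lo K) \<le> g (hi K)" using lohi[OF Ki] by blast
        then show ?thesis unfolding A_def ss_def tt_def by (cases "lo K \<le> hi K") (auto simp: max_def min_def)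
      qed
      ultimately show ?thesis by simp
    qed
    have "(\<Union>K\<in>\<D>. A K) \<in> lmeasurable" "measure lebesgue (\<Union>K\<in>\<D>. A K) \<le> e"
      using fmeasurable_UN_bound[OF Dc _ bound] measure_UN_bound[OF Dc _ bound]
      unfolding A_def by auto
    moreover have "g ` N \<subseteq> (\<Union>K\<in>\<D>. A K)"
    proof
      fix y assume "y \<in> g ` N"
      then obtain z where "z \<in> N" "y = g z" by auto
      then obtain K where "K \<in> \<D>" "z \<in> K" using NsubD by auto
      then show "y \<in> (\<Union>K\<in>\<D>. A K)" using lohi \<open>y = g z\<close> unfolding A_def by fastforce
    qed
    ultimately show "\<exists>T. g ` N \<subseteq> T \<and> T \<in> lmeasurable \<and> measure lebesgue T \<le> e" by blast
  qed
qed

lemma ac_increment_bound: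
  fixes g g' p :: "real \<Rightarrow> real"
  assumes ab: "a \<le> b"
    and cont: "continuous_on {a..b} g"
    and ac: "abs_cont_on a b g"
    and N: "negligible N"
    and der: "\<And>t. t \<in> {a..b} - N \<Longrightarrow> (g has_real_derivative g' t) (at t)"
    and bnd: "\<And>t. t \<in> {a..b} - N \<Longrightarrow> \<bar>g' t\<bar> \<le> p t"
    and gm: "g' \<in> borel_measurable lborel"
    and pint: "p integrable_on {a..b}"
  shows "g b - g a \<le> integral {a..b} p"
proof -
  define S where "S = {a..b} - N"
  have Sl: "S \<in> sets lebesgue" unfolding S_def
    using N by (intro sets.Diff) (auto simp: negligible_imp_sets)
  have derS: "\<And>t. t \<in> S \<Longrightarrow> (g has_real_derivative g' t) (at t within S)"
    using der unfolding S_def by (simp add: has_field_derivative_at_within)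
  have negd: "negligible {x \<in> {a..b} - S. f x \<noteq> 0}" "negligible {x \<in> S - {a..b}. f x \<noteq> 0}" for f :: "real \<Rightarrow> real"
    unfolding S_def using N by (auto intro: negligible_subset)
  have pS: "p integrable_on S" using integrable_spike_set[OF pint negd] .
  have pSeq: "integral {a..b} p = integral S p" using integral_spike_set[OF negd] .
  have gm': "(\<lambda>x. \<bar>g' x\<bar>) \<in> borel_measurable (lebesgue_on S)"
  proof -
    have "(\<lambda>x. \<bar>g' x\<bar>) \<in> borel_measurable lborel" using gm by measurable
    then have "(\<lambda>x. \<bar>g' x\<bar>) \<in> borel_measurable lebesgue" by (rule measurable_completion)
    then show ?thesis by (rule measurable_restrict_space1)
  qed
  have gS: "(\<lambda>x. \<bar>g' x\<bar>) integrable_on S"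
    by (rule measurable_bounded_by_integrable_imp_integrable[OF gm' pS _ Sl]) (use bnd S_def in auto)
  note im = image_measure_1d[OF Sl derS gS]
  have le1: "integral S (\<lambda>x. \<bar>g' x\<bar>) \<le> integral S p"
    by (rule integral_le[OF gS pS]) (use bnd S_def in auto)
  have nn: "0 \<le> integral S (\<lambda>x. \<bar>g' x\<bar>)"
    by (rule integral_nonneg[OF gS]) auto
  have negN: "negligible (g ` (N \<inter> {a..b}))"
    by (rule ac_null_image[OF ac cont]) (auto intro: negligible_subset[OF N])
  show ?thesis
  proof (cases "g a \<le> g b")
    case False
    then show ?thesis using le1 nn pSeq by linarith
  next
    case True
    have sub: "{g a..g b} \<subseteq> g ` S \<union> g ` (N \<inter> {a..b})"
    proof
      fix y assume "y \<in> {g a..g b}"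
      then obtain x where "a \<le> x" "x \<le> b" "g x = y" using IVT'[of g a y b] True ab cont by auto
      then show "y \<in> g ` S \<union> g ` (N \<inter> {a..b})" unfolding S_def by auto
    qed
    have "measure lebesgue {g a..g b} \<le> measure lebesgue (g ` S \<union> g ` (N \<inter> {a..b}))"
    proof (rule measure_mono_fmeasurable[OF sub])
      show "{g a..g b} \<in> sets lebesgue" by simp
      show "g ` S \<union> g ` (N \<inter> {a..b}) \<in> lmeasurable"
        using im negN by (intro fmeasurable.Un) (auto simp: negligible_imp_measurable)
    qed
    also have "\<dots> = measure lebesgue (g ` S)"
      using im negN by (intro measure_Un_null_set) (auto simp: negligible_iff_null_sets fmeasurable_def)
    finally show ?thesis using True im le1 pSeq by simp
  qed
qed

lemma adm_int: "admissible_q q \<Longrightarrow> q integrable_on {a..b}"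
  unfolding admissible_q_def using set_borel_integral_eq_integral(1) by blast

lemma adm_N:
  assumes "admissible_q q"
  obtains N where "negligible N" "\<And>t. t \<notin> N \<Longrightarrow> 1 \<le> q t"
proof -
  have "AE x in lborel. 1 \<le> q x" using assms unfolding admissible_q_def by blast
  then obtain N where N: "{x \<in> space lborel. \<not> 1 \<le> q x} \<subseteq> N" "emeasure lborel N = 0" "N \<in> sets lborel"
    by (rule AE_E)
  then have "N \<in> null_sets lborel" by auto
  then have "negligible N" using null_sets_completionI negligible_iff_null_sets by blast
  moreover have "\<And>t. t \<notin> N \<Longrightarrow> 1 \<le> q t" using N(1) by auto
  ultimately show ?thesis using that by blast
qed

lemma q_int_ge:
  assumes adm: "admissible_q q" and ab: "a \<le> b"
  shows "b - a \<le> integral {a..b} q"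
proof -
  obtain N where N: "negligible N" "\<And>t. t \<notin> N \<Longrightarrow> 1 \<le> q t" using adm_N[OF adm] by blast
  define q1 where "q1 t = (if t \<in> N then 1 else q t)" for t
  have e: "integral {a..b} q = integral {a..b} q1"
    by (rule integral_spike[OF N(1)]) (auto simp: q1_def)
  have i1: "q1 integrable_on {a..b}"
    by (rule integrable_spike[OF adm_int[OF adm] N(1)]) (auto simp: q1_def)
  have "integral {a..b} (\<lambda>t. 1::real) \<le> integral {a..b} q1"
    by (rule integral_le[OF _ i1]) (auto simp: q1_def N(2))
  then show ?thesis using e ab by simp
qed

lemma q_int_mono:
  assumes adm: "admissible_q q" and "a \<le> c" "c \<le> d" "d \<le> b"
  shows "integral {c..d} q \<le> integral {a..b} q"
proof -
  have i: "q integrable_on {a..b}" "q integrable_on {c..b}" by (rule adm_int[OF adm])+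
  have cb: "c \<le> b" using assms by linarith
  have 1: "integral {a..c} q + integral {c..b} q = integral {a..b} q"
    using Henstock_Kurzweil_Integration.integral_combine[OF assms(2) cb i(1)] .
  have 2: "integral {c..d} q + integral {d..b} q = integral {c..b} q"
    using Henstock_Kurzweil_Integration.integral_combine[OF assms(3) assms(4) i(2)] .
  have "0 \<le> integral {a..c} q" "0 \<le> integral {d..b} q"
    using q_int_ge[OF adm, of a c] q_int_ge[OF adm, of d b] assms by auto
  then show ?thesis using 1 2 by linarith
qed

lemma sol_bound:
  assumes adm: "admissible_q q" and sol: "is_solution q z" and ab: "a \<le> b"
    and M: "\<And>t. t \<in> {a..b} \<Longrightarrow> \<bar>z t\<bar> \<le> M"
  shows "deriv z b - deriv z a \<le> M * integral {a..b} q"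
proof -
  have dif: "\<And>x. z differentiable at x" and dc: "continuous_on UNIV (deriv z)"
    and lac: "loc_abs_cont (deriv z)"
    and ae: "AE x in lborel. (deriv z has_real_derivative q x * z x) (at x)"
    using sol unfolding is_solution_def by auto
  obtain N2 where N2: "negligible N2" "\<And>t. t \<notin> N2 \<Longrightarrow> 1 \<le> q t" using adm_N[OF adm] by blast
  from ae obtain N1 where N1: "{x \<in> space lborel. \<not> (deriv z has_real_derivative q x * z x) (at x)} \<subseteq> N1"
      "emeasure lborel N1 = 0" "N1 \<in> sets lborel"
    by (rule AE_E)
  then have "N1 \<in> null_sets lborel" by auto
  then have nN1: "negligible N1" using null_sets_completionI negligible_iff_null_sets by blast
  have zc: "continuous_on UNIV z"
    using dif by (meson continuous_at_imp_continuous_on differentiable_imp_continuous_within)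
  have qm: "q \<in> borel_measurable lborel" using adm unfolding admissible_q_def by blast
  have zm: "z \<in> borel_measurable lborel" using borel_measurable_continuous_onI[OF zc] by simp
  have gm: "(\<lambda>t. q t * z t) \<in> borel_measurable lborel" using qm zm by measurable
  have M0: "0 \<le> M" using M[of a] ab by force
  have "deriv z b - deriv z a \<le> integral {a..b} (\<lambda>t. M * q t)"
  proof (rule ac_increment_bound[OF ab _ _ _ _ _ gm])
    show "continuous_on {a..b} (deriv z)" using dc by (rule continuous_on_subset) auto
    show "abs_cont_on a b (deriv z)" using lac unfolding loc_abs_cont_def by blast
    show "negligible (N1 \<union> N2)" using nN1 N2(1) by auto
    show "(deriv z has_real_derivative q t * z t) (at t)" if "t \<in> {a..b} - (N1 \<union> N2)" for t
      using that N1(1) by auto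
    show "\<bar>q t * z t\<bar> \<le> M * q t" if "t \<in> {a..b} - (N1 \<union> N2)" for t
    proof -
      have "1 \<le> q t" using that N2(2) by auto
      moreover have "\<bar>z t\<bar> \<le> M" using that M by auto
      ultimately show ?thesis by (simp add: abs_mult mult.commute mult_right_mono)
    qed
    show "(\<lambda>t. M * q t) integrable_on {a..b}"
      using integrable_on_mult_left[OF adm_int[OF adm], of M a b] by (simp add: mult.commute)
  qed
  then show ?thesis by simp
qed

lemma pfss_facts:
  assumes "PFSS q u v"
  shows "is_solution q u" "is_solution q v"
    "\<And>x. u x > 0" "\<And>x. v x > 0" "\<And>x. deriv u x < 0" "\<And>x. deriv v x > 0"
    "\<And>x. deriv v x * u x - deriv u x * v x = 1"
    "\<And>x. (u has_real_derivative deriv u x) (at x)"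
    "\<And>x. (v has_real_derivative deriv v x) (at x)"
proof -
  show su: "is_solution q u" and sv: "is_solution q v" using assms unfolding PFSS_def by auto
  show "\<And>x. u x > 0" "\<And>x. v x > 0" "\<And>x. deriv u x < 0" "\<And>x. deriv v x > 0"
    "\<And>x. deriv v x * u x - deriv u x * v x = 1" using assms unfolding PFSS_def by blast+
  show "\<And>x. (u has_real_derivative deriv u x) (at x)"
    using su unfolding is_solution_def using DERIV_deriv_iff_real_differentiable by blast
  show "\<And>x. (v has_real_derivative deriv v x) (at x)"
    using sv unfolding is_solution_def using DERIV_deriv_iff_real_differentiable by blast
qed

lemma v_bound:
  assumes adm: "admissible_q q" and P: "PFSS q u v" and h: "h > 0"
  shows "deriv v s \<le> v s / h + v s * integral {s-h..s} q"
proof -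
  note F = pfss_facts[OF P]
  obtain \<xi> where xi: "s - h < \<xi>" "\<xi> < s" "v s - v (s-h) = (s - (s-h)) * deriv v \<xi>"
    using MVT2[of "s-h" s v "deriv v"] h F(9) by auto
  have "h * deriv v \<xi> \<le> v s" using xi(3) F(4)[of "s-h"] by simp
  then have d1: "deriv v \<xi> \<le> v s / h" using h by (simp add: pos_le_divide_eq mult.commute)
  have M: "\<bar>v t\<bar> \<le> v s" if "t \<in> {\<xi>..s}" for t
  proof -
    have "v t \<le> v s"
      using that F(9) F(6) by (intro DERIV_nonneg_imp_nondecreasing[of t s v]) (auto intro: less_imp_le)
    then show ?thesis using F(4)[of t] by simp
  qed
  have d2: "deriv v s - deriv v \<xi> \<le> v s * integral {\<xi>..s} q"
    using sol_bound[OF adm F(2) _ M] xi by simp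
  have "integral {\<xi>..s} q \<le> integral {s-h..s} q"
    using q_int_mono[OF adm, of "s-h" \<xi> s s] xi by simp
  then have "v s * integral {\<xi>..s} q \<le> v s * integral {s-h..s} q"
    using F(4)[of s] by (simp add: mult_left_mono)
  then show ?thesis using d1 d2 by linarith
qed

lemma u_bound:
  assumes adm: "admissible_q q" and P: "PFSS q u v" and h: "h > 0"
  shows "- deriv u s \<le> u s / h + u s * integral {s..s+h} q"
proof -
  note F = pfss_facts[OF P]
  obtain \<xi> where xi: "s < \<xi>" "\<xi> < s + h" "u (s+h) - u s = (s + h - s) * deriv u \<xi>"
    using MVT2[of s "s+h" u "deriv u"] h F(8) by auto
  have "- (h * deriv u \<xi>) \<le> u s" using xi(3) F(3)[of "s+h"] by simp
  then have d1: "- deriv u \<xi> \<le> u s / h" using h by (simp add: pos_le_divide_eq mult.commute)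
  have M: "\<bar>u t\<bar> \<le> u s" if "t \<in> {s..\<xi>}" for t
  proof -
    have "u s \<ge> u t"
      using that F(8) F(5) by (intro DERIV_nonpos_imp_nonincreasing[of s t u]) (auto intro: less_imp_le)
    then show ?thesis using F(3)[of t] by simp
  qed
  have d2: "deriv u \<xi> - deriv u s \<le> u s * integral {s..\<xi>} q"
    using sol_bound[OF adm F(1) _ M] xi by simp
  have "integral {s..\<xi>} q \<le> integral {s..s+h} q"
    using q_int_mono[OF adm, of s s \<xi> "s+h"] xi by simp
  then have "u s * integral {s..\<xi>} q \<le> u s * integral {s..s+h} q"
    using F(3)[of s] by (simp add: mult_left_mono)
  then show ?thesis using d1 d2 by linarith
qed

lemma rho_bound:
  assumes adm: "admissible_q q" and P: "PFSS q u v" and d: "d > 0"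
    and I: "d * integral {x-d..x+d} q = 2" and s: "\<bar>s - x\<bar> \<le> d/2"
  shows "d/6 \<le> u s * v s"
proof -
  note F = pfss_facts[OF P]
  define h where "h = d/2"
  have h: "h > 0" using d by (simp add: h_def)
  define I1 where "I1 = integral {s-h..s} q"
  define I2 where "I2 = integral {s..s+h} q"
  have vb: "deriv v s \<le> v s / h + v s * I1" using v_bound[OF adm P h] unfolding I1_def .
  have ub: "- deriv u s \<le> u s / h + u s * I2" using u_bound[OF adm P h] unfolding I2_def .
  have "I1 + I2 = integral {s-h..s+h} q"
    unfolding I1_def I2_def using h
    by (intro Henstock_Kurzweil_Integration.integral_combine adm_int[OF adm]) auto
  also have "\<dots> \<le> integral {x-d..x+d} q"
    using s h_def by (intro q_int_mono[OF adm]) auto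
  also have "\<dots> = 2/d" using I d by (simp add: field_simps)
  finally have I12: "I1 + I2 \<le> 2/d" .
  have "1 = deriv v s * u s + (- deriv u s) * v s" using F(7)[of s] by simp
  also have "\<dots> \<le> (v s / h + v s * I1) * u s + (u s / h + u s * I2) * v s"
    using vb ub F(3)[of s] F(4)[of s] by (intro add_mono mult_right_mono) auto
  also have "\<dots> = u s * v s * (2/h + (I1 + I2))" by (simp add: field_simps)
  also have "\<dots> \<le> u s * v s * (2/h + 2/d)"
    using I12 F(3)[of s] F(4)[of s] by (intro mult_left_mono) auto
  also have "\<dots> = u s * v s * (6/d)" unfolding h_def using d by (simp add: field_simps)
  finally have "1 \<le> u s * v s * (6/d)" .
  then show ?thesis using d by (simp add: field_simps)
qed

lemma G_bound:
  assumes adm: "admissible_q q" and P: "PFSS q u v" and d: "d > 0"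
    and I: "d * integral {x-d..x+d} q = 2"
    and a: "x - d/2 \<le> a" and ab: "a \<le> b" and b: "b \<le> x + d/2"
  shows "exp (-3) * d / 6 \<le> u b * v a"
proof -
  note F = pfss_facts[OF P]
  define \<phi> where "\<phi> r = u r / v r * exp (6 * r / d)" for r
  have der: "(\<phi> has_real_derivative exp (6 * r / d) * (6 * (u r * v r) / d - 1) / (v r)\<^sup>2) (at r)"
    if r: "r \<in> {a..b}" for r
  proof -
    have vr: "v r \<noteq> 0" using F(4)[of r] by simp
    have D0: "(\<phi> has_real_derivative (deriv u r * v r - u r * deriv v r) / (v r * v r) * exp (6 * r / d) + exp (6 * r / d) * (6 / d) * (u r / v r)) (at r)"
      unfolding \<phi>_def
      by (intro DERIV_mult DERIV_divide F(8) F(9) vr DERIV_fun_exp) (use d in \<open>auto intro!: derivative_eq_intros\<close>)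
    have W: "deriv u r * v r - u r * deriv v r = -1" using F(7)[of r] by (simp add: algebra_simps)
    have "(deriv u r * v r - u r * deriv v r) / (v r * v r) * exp (6 * r / d) + exp (6 * r / d) * (6 / d) * (u r / v r)
        = exp (6 * r / d) * (6 * (u r * v r) / d - 1) / (v r)\<^sup>2"
      unfolding W using vr d by (simp add: field_simps power2_eq_square)
    then show ?thesis using D0 by simp
  qed
  have mono: "\<phi> a \<le> \<phi> b"
  proof (rule DERIV_nonneg_imp_nondecreasing[OF ab])
    fix r assume r: "a \<le> r" "r \<le> b"
    have "\<bar>r - x\<bar> \<le> d/2" unfolding abs_le_iff using r a b by (intro conjI; linarith)
    then have "d/6 \<le> u r * v r" by (rule rho_bound[OF adm P d I])
    then have "0 \<le> 6 * (u r * v r) / d - 1" using d by (simp add: field_simps)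
    then have "0 \<le> exp (6 * r / d) * (6 * (u r * v r) / d - 1) / (v r)\<^sup>2" by simp
    then show "\<exists>y. (\<phi> has_real_derivative y) (at r) \<and> 0 \<le> y" using der r by auto
  qed
  have pa: "0 < u a" "0 < v a" "0 < u b" "0 < v b" using F(3) F(4) by auto
  define A where "A = u a / v a"
  define B where "B = u b / v b"
  have Ap: "0 < A" "0 < B" unfolding A_def B_def using pa by auto
  have m: "A * exp (6 * a / d) \<le> B * exp (6 * b / d)" using mono unfolding \<phi>_def A_def B_def .
  have "A = A * exp (6 * a / d) * exp (- (6 * a / d))" by (simp add: exp_minus field_simps)
  also have "\<dots> \<le> B * exp (6 * b / d) * exp (- (6 * a / d))" using m by simp
  also have "\<dots> = B * exp (6 * b / d - 6 * a / d)" by (simp add: exp_diff exp_minus field_simps)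
  also have "\<dots> \<le> B * exp 6"
  proof -
    have "b - a \<le> d" using a b by simp
    then have "6 * (b - a) \<le> 6 * d" by simp
    then have "6 * b / d - 6 * a / d \<le> 6" using d by (simp add: field_simps)
    then show ?thesis using Ap by simp
  qed
  finally have "A \<le> B * exp 6" .
  then have "A * exp (-6) \<le> B * exp 6 * exp (-6)" by simp
  also have "\<dots> = B" by (simp add: exp_minus)
  finally have r1: "A * exp (-6) \<le> B" .
  have k1: "exp (-6) \<le> B * (v a / u a)"
  proof -
    have "A * exp (-6) * (v a / u a) \<le> B * (v a / u a)" using r1 pa by (intro mult_right_mono) auto
    moreover have "A * exp (-6) * (v a / u a) = exp (-6)" unfolding A_def using pa by (simp add: field_simps)
    ultimately show ?thesis by simp
  qed
  have "\<bar>a - x\<bar> \<le> d/2" unfolding abs_le_iff using a b ab by (intro conjI; linarith)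
  then have ra: "d/6 \<le> u a * v a" by (rule rho_bound[OF adm P d I])
  have "\<bar>b - x\<bar> \<le> d/2" unfolding abs_le_iff using a b ab by (intro conjI; linarith)
  then have rb: "d/6 \<le> u b * v b" by (rule rho_bound[OF adm P d I])
  have k2: "(d/6) * (d/6) \<le> (u a * v a) * (u b * v b)"
    by (rule mult_mono[OF ra rb]) (use ra d in linarith)+
  have eq: "(u b * v a)\<^sup>2 = (B * (v a / u a)) * ((u a * v a) * (u b * v b))"
    unfolding B_def using pa by (simp add: field_simps power2_eq_square)
  have "exp (-6) * ((d/6) * (d/6)) \<le> (B * (v a / u a)) * ((u a * v a) * (u b * v b))"
    by (rule mult_mono[OF k1 k2]) (use Ap pa d in auto)
  moreover have "exp (-6) * ((d/6) * (d/6)) = (exp (-3) * d / 6)\<^sup>2"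
  proof -
    have "exp (-6::real) = exp (-3) * exp (-3)" by (simp add: exp_add[symmetric])
    then show ?thesis by (simp add: power2_eq_square)
  qed
  ultimately have X: "(exp (-3) * d / 6)\<^sup>2 \<le> (B * (v a / u a)) * ((u a * v a) * (u b * v b))" by linarith
  have Y: "(exp (-3) * d / 6)\<^sup>2 \<le> (u b * v a)\<^sup>2" using X eq by linarith
  have Z: "0 \<le> u b * v a" using pa by simp
  show ?thesis by (rule power2_le_imp_le[OF Y Z])
qed

lemma lbint_eq_integral:
  assumes adm: "admissible_q q" and "a \<le> b"
  shows "(LBINT t=a..b. q t) = integral {a..b} q"
proof -
  have si: "set_integrable lborel {a..b} q" using adm unfolding admissible_q_def by blast
  have "(LBINT t=a..b. q t) = (LBINT t:{a..b}. q t)" using assms(2) by (rule interval_integral_Icc)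
  also have "\<dots> = integral {a..b} q" using set_borel_integral_eq_integral(2)[OF si] .
  finally show ?thesis .
qed

lemma dfun_prop:
  assumes adm: "admissible_q q"
  shows "dfun q x > 0 \<and> dfun q x * integral {x - dfun q x..x + dfun q x} q = 2"
proof -
  define J where "J r = integral {x-r..x+r} q" for r
  define \<phi> where "\<phi> r = r * J r" for r
  have Jge: "2 * r \<le> J r" if "0 \<le> r" for r
    using q_int_ge[OF adm, of "x-r" "x+r"] that unfolding J_def by simp
  have Jmono: "J r1 \<le> J r2" if "0 \<le> r1" "r1 \<le> r2" for r1 r2
    using q_int_mono[OF adm, of "x-r2" "x-r1" "x+r1" "x+r2"] that unfolding J_def by simp
  have Peq: "(d > 0 \<and> d * (LBINT t=x-d..x+d. q t) = 2) \<longleftrightarrow> (d > 0 \<and> \<phi> d = 2)" for d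
  proof (cases "d > 0")
    case True
    then have "(LBINT t=x-d..x+d. q t) = J d" unfolding J_def by (intro lbint_eq_integral[OF adm]) simp
    then show ?thesis unfolding \<phi>_def by simp
  qed simp
  have smono: "\<phi> r1 < \<phi> r2" if "0 < r1" "r1 < r2" for r1 r2
  proof -
    have "\<phi> r1 \<le> r1 * J r2" unfolding \<phi>_def using Jmono[of r1 r2] that by (intro mult_left_mono) auto
    also have "\<dots> < r2 * J r2"
    proof -
      have "0 < J r2" using Jge[of r2] that by linarith
      then show ?thesis using that by (intro mult_strict_right_mono) auto
    qed
    finally show ?thesis unfolding \<phi>_def .
  qed
  define F where "F y = integral {x-3..y} q" for y
  have cF: "continuous_on {x-3..x+3} F" unfolding F_def by (rule indefinite_integral_continuous_1[OF adm_int[OF adm]])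
  have JF: "J r = F (x + r) - F (x - r)" if "0 \<le> r" "r \<le> 2" for r
  proof -
    have "integral {x-3..x-r} q + integral {x-r..x+r} q = integral {x-3..x+r} q"
      using that by (intro Henstock_Kurzweil_Integration.integral_combine adm_int[OF adm]) auto
    then show ?thesis unfolding J_def F_def by simp
  qed
  have c1: "continuous_on {0..2} (\<lambda>r. F (x + r))"
    by (rule continuous_on_compose2[OF cF]) (auto intro!: continuous_intros)
  have c2: "continuous_on {0..2} (\<lambda>r. F (x - r))"
    by (rule continuous_on_compose2[OF cF]) (auto intro!: continuous_intros)
  have cphi: "continuous_on {0..2} \<phi>"
  proof -
    have "continuous_on {0..2} (\<lambda>r. r * (F (x + r) - F (x - r)))"
      using c1 c2 by (intro continuous_intros)
    then show ?thesis by (rule continuous_on_eq) (simp add: \<phi>_def JF)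
  qed
  define r0 where "r0 = 1 / (J 1 + 1)"
  have J1: "2 \<le> J 1" using Jge[of 1] by simp
  have r0: "0 < r0" "r0 \<le> 1" unfolding r0_def using J1 by auto
  have "\<phi> r0 \<le> r0 * J 1" unfolding \<phi>_def using Jmono[of r0 1] r0 by (intro mult_left_mono) auto
  also have "\<dots> < r0 * (J 1 + 1)" using r0 by simp
  also have "\<dots> = 1" unfolding r0_def using J1 by simp
  finally have p0: "\<phi> r0 \<le> 2" by simp
  have p2: "2 \<le> \<phi> 2" unfolding \<phi>_def using Jge[of 2] by simp
  obtain r where r: "r0 \<le> r" "r \<le> 2" "\<phi> r = 2"
    using IVT'[of \<phi> r0 2 2] p0 p2 r0 continuous_on_subset[OF cphi, of "{r0..2}"] by auto
  have rpos: "r > 0" using r r0 by simp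
  have ex1: "\<exists>!d. d > 0 \<and> d * (LBINT t=x-d..x+d. q t) = 2"
  proof (rule ex1I[of _ r])
    show "r > 0 \<and> r * (LBINT t=x-r..x+r. q t) = 2" using Peq rpos r by blast
  next
    fix d assume "d > 0 \<and> d * (LBINT t=x-d..x+d. q t) = 2"
    then have d: "d > 0" "\<phi> d = 2" using Peq by blast+
    show "d = r"
    proof (rule ccontr)
      assume "d \<noteq> r"
      then have "d < r \<or> r < d" by linarith
      then show False using smono[of d r] smono[of r d] d rpos r by auto
    qed
  qed
  have "dfun q x = r" unfolding dfun_def
    by (rule the1_equality[OF ex1]) (use Peq rpos r in blast)
  then show ?thesis using rpos r unfolding \<phi>_def J_def by simp
qed

theorem lemma5p2:
  "\<exists>c>0. \<forall>q u v. admissible_q q \<longrightarrow> PFSS q u v \<longrightarrow>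
     (\<forall>x. \<forall>t\<in>Delta q x.
        green_op u v (indicator (Delta q x)) t \<ge> (dfun q x)\<^sup>2 / c)"
proof (intro exI[of _ "6 * exp 3"] conjI allI impI ballI)
  show "(0::real) < 6 * exp 3" by simp
  fix q u v x t
  assume adm: "admissible_q q" and P: "PFSS q u v" and t: "t \<in> Delta q x"
  define d where "d = dfun q x"
  have d: "d > 0" and I: "d * integral {x-d..x+d} q = 2" using dfun_prop[OF adm, of x] unfolding d_def by auto
  define D where "D = {x - d/2..x + d/2}"
  have DD: "Delta q x = D" unfolding Delta_def D_def d_def ..
  have tD: "t \<in> D" using t DD by simp
  note F = pfss_facts[OF P]
  have uc: "continuous_on UNIV u" using F(8) by (meson DERIV_isCont continuous_at_imp_continuous_on)
  have vc: "continuous_on UNIV v" using F(9) by (meson DERIV_isCont continuous_at_imp_continuous_on)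
  have geq: "green u v t = (\<lambda>s. u (max t s) * v (min t s))"
    by (rule ext) (simp add: green_def max_def min_def)
  have gc: "continuous_on D (green u v t)"
    unfolding geq
    by (intro continuous_intros continuous_on_compose2[OF uc] continuous_on_compose2[OF vc]) auto
  have si: "set_integrable lborel D (green u v t)"
    unfolding set_integrable_def D_def using borel_integrable_compact[OF _ gc[unfolded D_def]] by simp
  have "green_op u v (indicator (Delta q x)) t = (LINT s:D|lborel. green u v t s)"
    unfolding green_op_def DD set_lebesgue_integral_def by (simp add: mult.commute)
  also have "\<dots> = integral D (green u v t)" using set_borel_integral_eq_integral(2)[OF si] .
  finally have eq: "green_op u v (indicator (Delta q x)) t = integral D (green u v t)" .
  define m where "m = exp (-3) * d / 6"
  have lb: "m \<le> green u v t s" if s: "s \<in> D" for s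
  proof -
    have "exp (-3) * d / 6 \<le> u (max t s) * v (min t s)"
      using tD s unfolding D_def by (intro G_bound[OF adm P d I]) auto
    then show ?thesis unfolding m_def geq by simp
  qed
  have gi: "green u v t integrable_on D"
    unfolding D_def by (rule integrable_continuous_interval) (use gc D_def in simp)
  have "integral D (\<lambda>s. m) \<le> integral D (green u v t)"
    by (rule integral_le[OF _ gi]) (use lb D_def in auto)
  moreover have "integral D (\<lambda>s. m) = d * m" unfolding D_def using d by simp
  moreover have "d * m = (dfun q x)\<^sup>2 / (6 * exp 3)"
    unfolding m_def d_def by (simp add: exp_minus field_simps power2_eq_square)
  ultimately show "(dfun q x)\<^sup>2 / (6 * exp 3) \<le> green_op u v (indicator (Delta q x)) t"
    using eq by simp
qed

end
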